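(* Let $N\ge 2$ and $m$ be integers, let $v=e^{\pi i/N}$, and for integers $n$ put $\{n\}=v^n-v^{-n}$, $A(j,k)=\{j-k\}\{j+k\}$, $S(k,l)=\prod_{k\le n\le l}\{n\}$ and $S'(k,l)=\prod_{k\le n\le l,\ n\notin\{0,N\}}\{n\}$. For a finite family $(a_i)_{i\in I}$ put ${\prod'_{i\in I}}a_i=\sum_{i\in I}\prod_{r\in I\setminus\{i\}}a_r$. For integers $0\le j\le N-1$, $0\le l\le N-1$ define $$D(j,l)=(v^j+v^{-j})\Big(\prod_{k=1}^lA(j,k)+2\{j\}^2{\prod_{1\le k\le l}}'A(j,k)\Big)+\frac{mj}{2}\{j\}\prod_{k=1}^lA(j,k).$$ Then $D(j,l)=D_1(j,l)+D_2(j,l)$, where $D_1(j,l)=\Big(\frac{mj}{2}+\frac{v^j+v^{-j}}{\{j\}}+2\{2j\}\sum_{k=1}^l\frac{1}{A(j,k)}\Big)S(j-l,j+l)$ if $l<\min(j,N-j)$, and $D_1(j,l)=0$ if $l\ge\min(j,N-j)$; and $D_2(j,l)=2S'(j-l,j+l)$ if $j\le l<N-j$, $D_2(j,l)=-2S'(j-l,j+l)$ if $N-j\le l<j$, and $D_2(j,l)=0$ if $l<\min(j,N-j)$ or $l\ge\max(j,N-j)$. *)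

theory Defs
  imports Complex_Main
begin

definition vv :: "int \<Rightarrow> complex" where
  "vv N = exp (complex_of_real pi * \<i> / of_int N)"

definition br :: "int \<Rightarrow> int \<Rightarrow> complex" where
  "br N n = vv N powi n - vv N powi (- n)"

definition AA :: "int \<Rightarrow> int \<Rightarrow> int \<Rightarrow> complex" where
  "AA N j k = br N (j - k) * br N (j + k)"

definition SS :: "int \<Rightarrow> int \<Rightarrow> int \<Rightarrow> complex" where
  "SS N k l = (\<Prod>n\<in>{k..l}. br N n)"

definition SS' :: "int \<Rightarrow> int \<Rightarrow> int \<Rightarrow> complex" where
  "SS' N k l = (\<Prod>n\<in>{n\<in>{k..l}. n \<noteq> 0 \<and> n \<noteq> N}. br N n)"

definition prodp :: "('i \<Rightarrow> complex) \<Rightarrow> 'i set \<Rightarrow> complex" where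
  "prodp a I = (\<Sum>i\<in>I. \<Prod>r\<in>I - {i}. a r)"

definition DD :: "int \<Rightarrow> int \<Rightarrow> int \<Rightarrow> int \<Rightarrow> complex" where
  "DD N m j l =
     (vv N powi j + vv N powi (- j)) *
       ((\<Prod>k\<in>{1..l}. AA N j k) + 2 * (br N j)\<^sup>2 * prodp (AA N j) {1..l})
     + of_int m * of_int j / 2 * br N j * (\<Prod>k\<in>{1..l}. AA N j k)"

definition DD1 :: "int \<Rightarrow> int \<Rightarrow> int \<Rightarrow> int \<Rightarrow> complex" where
  "DD1 N m j l =
     (if l < min j (N - j) then
        (of_int m * of_int j / 2 + (vv N powi j + vv N powi (- j)) / br N j
          + 2 * br N (2 * j) * (\<Sum>k\<in>{1..l}. 1 / AA N j k)) * SS N (j - l) (j + l)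
      else 0)"

definition DD2 :: "int \<Rightarrow> int \<Rightarrow> int \<Rightarrow> complex" where
  "DD2 N j l =
     (if j \<le> l \<and> l < N - j then 2 * SS' N (j - l) (j + l)
      else if N - j \<le> l \<and> l < j then - 2 * SS' N (j - l) (j + l)
      else 0)"

end

theory Submission imports Defs "HOL-Analysis.Analysis" begin

definition zz :: "int \<Rightarrow> complex" where "zz N = complex_of_real pi * \<i> / of_int N"

lemma vv_powi: "vv N powi n = exp (of_int n * zz N)"
  unfolding vv_def zz_def by (simp add: exp_power_int)

lemma br_exp: "br N n = exp (of_int n * zz N) - exp (- (of_int n * zz N))"
  unfolding br_def vv_powi by simp

lemma br0[simp]: "br N 0 = 0" by (simp add: br_def)

lemma expNz: "N \<noteq> 0 \<Longrightarrow> exp (of_int N * zz N) = -1"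
  unfolding zz_def by simp

lemma br_double: "br N (2*j) = (vv N powi j + vv N powi (-j)) * br N j"
proof -
  define w where "w = of_int j * zz N"
  have q1: "of_int (2*j) * zz N = w + w" by (simp add: w_def algebra_simps)
  have q2: "- (of_int (2*j) * zz N) = (-w) + (-w)" by (simp add: w_def algebra_simps)
  have e1: "exp (of_int (2*j) * zz N) = exp w * exp w" unfolding q1 by (rule exp_add)
  have e2: "exp (- (of_int (2*j) * zz N)) = exp (-w) * exp (-w)" unfolding q2 by (rule exp_add)
  have "br N (2*j) = exp w * exp w - exp (-w) * exp (-w)" unfolding br_exp e1 e2 ..
  also have "\<dots> = (exp w + exp (-w)) * (exp w - exp (-w))" by (simp add: algebra_simps)
  finally show ?thesis unfolding br_exp vv_powi w_def by simp
qed

lemma br_shift: "N \<noteq> 0 \<Longrightarrow> br N (n - N) = - br N n"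
proof -
  assume N: "N \<noteq> 0"
  have a: "exp (of_int (n - N) * zz N) = - exp (of_int n * zz N)"
    using expNz[OF N] by (simp add: left_diff_distrib exp_diff)
  have b: "exp (- (of_int (n - N) * zz N)) = - exp (- (of_int n * zz N))"
    using expNz[OF N] by (simp add: left_diff_distrib exp_diff exp_minus inverse_eq_divide)
  show ?thesis unfolding br_exp a b by simp
qed

lemma brN: "N \<noteq> 0 \<Longrightarrow> br N N = 0"
  using br_shift[of N N] by simp

lemma br_nz: assumes "N \<ge> 2" "n \<noteq> 0" "\<bar>n\<bar> < N" shows "br N n \<noteq> 0"
proof
  assume h: "br N n = 0"
  define w where "w = of_int n * zz N"
  have "exp w = exp (-w)" using h unfolding br_exp w_def[symmetric] by simp
  then have "exp w * exp w = exp (-w) * exp w" by simp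
  also have "\<dots> = 1" by (simp add: mult_exp_exp)
  also have "exp w * exp w = exp (w + w)" by (rule mult_exp_exp)
  finally have "exp (w + w) = 1" .
  then obtain k::int where k: "Im (w + w) = of_int (2*k) * pi" unfolding exp_eq_1 by blast
  have "w = complex_of_real (of_int n * pi / of_int N) * \<i>" unfolding w_def zz_def by simp
  then have "Im w = of_int n * pi / of_int N" by simp
  with k have "of_int n * pi / of_int N = of_int k * pi" by simp
  then have "of_int n * pi = (of_int k * of_int N) * pi" using assms(1) by (simp add: divide_eq_eq)
  then have "real_of_int n = of_int k * of_int N" by simp
  then have nk: "n = k * N" by (metis of_int_eq_iff of_int_mult)
  show False
  proof (cases "k = 0")
    case True then show ?thesis using nk assms by simp
  next
    case False
    then have "\<bar>k\<bar> \<ge> 1" by simp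
    then have "\<bar>k\<bar> * N \<ge> N" using assms(1) by simp
    then have "\<bar>n\<bar> \<ge> N" using nk assms(1) by (simp add: abs_mult)
    then show ?thesis using assms by simp
  qed
qed

lemma prod_sym_nat:
  fixes f :: "int \<Rightarrow> complex"
  shows "prod f {j - int l .. j + int l} = f j * (\<Prod>k\<in>{1..int l}. f (j-k) * f (j+k))"
proof (induction l)
  case 0 then show ?case by simp
next
  case (Suc l)
  have s1: "{j - int (Suc l) .. j + int (Suc l)} = insert (j - int l - 1) (insert (j + int l + 1) {j - int l .. j + int l})"
    by auto
  have s2: "{1..int (Suc l)} = insert (int l + 1) {1..int l}" by auto
  have "prod f {j - int (Suc l) .. j + int (Suc l)} = f (j - int l - 1) * (f (j + int l + 1) * prod f {j - int l .. j + int l})"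
    unfolding s1 by (simp add: prod.insert)
  also have "\<dots> = f j * (f (j - (int l + 1)) * f (j + (int l + 1)) * (\<Prod>k\<in>{1..int l}. f (j-k) * f (j+k)))"
    using Suc.IH by (simp add: algebra_simps)
  also have "\<dots> = f j * (\<Prod>k\<in>{1..int (Suc l)}. f (j-k) * f (j+k))"
    unfolding s2 by (simp add: prod.insert)
  finally show ?case .
qed

lemma prod_sym:
  fixes f :: "int \<Rightarrow> complex"
  assumes "0 \<le> l"
  shows "prod f {j - l .. j + l} = f j * (\<Prod>k\<in>{1..l}. f (j-k) * f (j+k))"
  using prod_sym_nat[of f j "nat l"] assms by simp

lemma prodp_nz:
  assumes "finite I" "\<And>i. i \<in> I \<Longrightarrow> a i \<noteq> 0"
  shows "prodp a I = prod a I * (\<Sum>i\<in>I. 1 / a i)"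
  unfolding prodp_def sum_distrib_left
proof (rule sum.cong[OF refl])
  fix i assume i: "i \<in> I"
  have "prod a I = a i * prod a (I - {i})" using prod.remove[OF assms(1) i] .
  then show "prod a (I - {i}) = prod a I * (1 / a i)" using assms(2)[OF i] by simp
qed

lemma prodp_zero:
  assumes "finite I" "i0 \<in> I" "a i0 = 0"
  shows "prodp a I = prod a (I - {i0})"
proof -
  have "prodp a I = prod a (I - {i0}) + (\<Sum>i\<in>I - {i0}. prod a (I - {i}))"
    unfolding prodp_def using sum.remove[OF assms(1,2)] by simp
  also have "(\<Sum>i\<in>I - {i0}. prod a (I - {i})) = 0"
  proof (rule sum.neutral, rule ballI)
    fix i assume "i \<in> I - {i0}"
    then have "i0 \<in> I - {i}" using assms by auto
    then show "prod a (I - {i}) = 0" using assms by (meson finite_Diff prod_zero)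
  qed
  finally show ?thesis by simp
qed

theorem lemma2p3:
  fixes N m j l :: int
  assumes "N \<ge> 2"
    and "0 \<le> j" and "j \<le> N - 1"
    and "0 \<le> l" and "l \<le> N - 1"
  shows "DD N m j l = DD1 N m j l + DD2 N j l"
proof -
  have N0: "N \<noteq> 0" using assms by simp
  define c where "c = vv N powi j + vv N powi (-j)"
  define b where "b = br N j"
  define I where "I = {1..l}"
  have fI: "finite I" unfolding I_def by simp
  define P where "P = (\<Prod>k\<in>I. AA N j k)"
  have dbl: "br N (2*j) = c*b" unfolding c_def b_def by (rule br_double)
  define g where "g n = (if n \<noteq> 0 \<and> n \<noteq> N then br N n else 1)" for n
  have SSp: "SS' N (j-l) (j+l) = g j * (\<Prod>k\<in>I. g (j-k) * g (j+k))"
    unfolding SS'_def I_def using prod.inter_filter[of "{j-l..j+l}" "br N" "\<lambda>n. n \<noteq> 0 \<and> n \<noteq> N"]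
      prod_sym[OF assms(4), of g j] by (simp add: g_def)
  have DDe: "DD N m j l = c * (P + 2 * b\<^sup>2 * prodp (AA N j) I) + of_int m * of_int j / 2 * b * P"
    unfolding DD_def c_def b_def P_def I_def ..
  consider (A) "l < min j (N-j)" | (B) "j = 0" | (C1) "1 \<le> j" "j \<le> l" "l < N-j"
    | (C2) "1 \<le> j" "N-j \<le> l" "l < j" | (C3) "1 \<le> j" "j \<le> l" "N-j \<le> l"
    using assms by (cases "j = 0"; cases "j \<le> l"; cases "N - j \<le> l") (auto simp: min_def)
  then show ?thesis
  proof cases
    case A
    have b0: "b \<noteq> 0" unfolding b_def using A assms by (intro br_nz) auto
    have nz: "AA N j k \<noteq> 0" if "k \<in> I" for k
    proof -
      have "br N (j-k) \<noteq> 0" using that A assms unfolding I_def by (intro br_nz) auto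
      moreover have "br N (j+k) \<noteq> 0" using that A assms unfolding I_def by (intro br_nz) auto
      ultimately show ?thesis unfolding AA_def by simp
    qed
    define T where "T = (\<Sum>k\<in>I. 1 / AA N j k)"
    have pp: "prodp (AA N j) I = P * T" unfolding P_def T_def using prodp_nz[OF fI nz] .
    have SS: "SS N (j-l) (j+l) = b * P"
      unfolding SS_def P_def b_def I_def AA_def using prod_sym[OF assms(4), of "br N" j] by simp
    have D1: "DD1 N m j l = (of_int m * of_int j / 2 + c / b + 2 * (c*b) * T) * (b * P)"
    proof -
      have "DD1 N m j l = (of_int m * of_int j / 2 + c / b + 2 * br N (2*j) * T) * SS N (j-l) (j+l)"
        unfolding DD1_def if_P[OF A] c_def b_def T_def I_def ..
      then show ?thesis unfolding SS dbl .
    qed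
    have D2: "DD2 N j l = 0" unfolding DD2_def using A by auto
    show ?thesis unfolding DDe D1 D2 pp using b0 by (simp add: field_simps power2_eq_square)
  next
    case B
    have D1: "DD1 N m j l = 0" unfolding DD1_def using B assms by simp
    have D2: "DD2 N j l = 2 * SS' N (j-l) (j+l)" unfolding DD2_def using B assms by simp
    have c2: "c = 2" unfolding c_def using B by simp
    have b0: "b = 0" unfolding b_def using B by simp
    have "(\<Prod>k\<in>I. g (j-k) * g (j+k)) = P" unfolding P_def
    proof (rule prod.cong[OF refl])
      fix k assume "k \<in> I"
      then have k: "1 \<le> k" "k \<le> l" unfolding I_def by auto
      then have "j-k \<noteq> 0" "j-k \<noteq> N" "j+k \<noteq> 0" "j+k \<noteq> N" using B assms by auto
      then show "g (j-k) * g (j+k) = AA N j k" unfolding g_def AA_def by simp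
    qed
    moreover have "g j = 1" unfolding g_def using B by simp
    ultimately have "SS' N (j-l) (j+l) = P" using SSp by simp
    then show ?thesis unfolding DDe D1 D2 c2 b0 by simp
  next
    case C1
    have D1: "DD1 N m j l = 0" unfolding DD1_def using C1 by simp
    have D2: "DD2 N j l = 2 * SS' N (j-l) (j+l)" unfolding DD2_def using C1 by simp
    have jI: "j \<in> I" unfolding I_def using C1 by simp
    have z: "AA N j j = 0" unfolding AA_def by simp
    have P0: "P = 0" unfolding P_def by (rule prod_zero[OF fI]) (use jI z in blast)
    define Q where "Q = prod (AA N j) (I - {j})"
    have pp: "prodp (AA N j) I = Q" unfolding Q_def using prodp_zero[of I _ "AA N j", OF fI jI z] .
    have "(\<Prod>k\<in>I. g (j-k) * g (j+k)) = (g (j-j) * g (j+j)) * (\<Prod>k\<in>I-{j}. g (j-k) * g (j+k))"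
      using prod.remove[OF fI jI, of "\<lambda>k. g (j-k) * g (j+k)"] by simp
    also have "(\<Prod>k\<in>I-{j}. g (j-k) * g (j+k)) = Q" unfolding Q_def
    proof (rule prod.cong[OF refl])
      fix k assume "k \<in> I - {j}"
      then have k: "1 \<le> k" "k \<le> l" "k \<noteq> j" unfolding I_def by auto
      have "j-k \<noteq> 0" using C1 k assms by linarith
      moreover have "j-k \<noteq> N" using C1 k assms by linarith
      moreover have "j+k \<noteq> 0" using C1 k assms by linarith
      moreover have "j+k \<noteq> N" using C1 k assms by linarith
      ultimately show "g (j-k) * g (j+k) = AA N j k" unfolding g_def AA_def by simp
    qed
    also have "g (j-j) * g (j+j) = c * b"
    proof -
      have e: "j - j = 0" "j + j = 2*j" by simp_all
      have "2*j \<noteq> 0" "2*j \<noteq> N" using C1 by linarith+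
      then have "g (2*j) = br N (2*j)" unfolding g_def by simp
      moreover have "g 0 = 1" unfolding g_def by simp
      ultimately show ?thesis unfolding e using dbl by simp
    qed
    finally have "SS' N (j-l) (j+l) = g j * (c * b * Q)" using SSp by simp
    moreover have "g j = b" unfolding g_def b_def using C1 assms by simp
    ultimately show ?thesis unfolding DDe D1 D2 pp P0 by (simp add: power2_eq_square)
  next
    case C2
    have D1: "DD1 N m j l = 0" unfolding DD1_def using C2 by simp
    have D2: "DD2 N j l = - 2 * SS' N (j-l) (j+l)" unfolding DD2_def using C2 by simp
    define k0 where "k0 = N - j"
    have jI: "k0 \<in> I" unfolding I_def k0_def using C2 assms by simp
    have z: "AA N j k0 = 0" unfolding AA_def k0_def using brN[OF N0] by simp
    have P0: "P = 0" unfolding P_def by (rule prod_zero[OF fI]) (use jI z in blast)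
    define Q where "Q = prod (AA N j) (I - {k0})"
    have pp: "prodp (AA N j) I = Q" unfolding Q_def using prodp_zero[of I _ "AA N j", OF fI jI z] .
    have "(\<Prod>k\<in>I. g (j-k) * g (j+k)) = (g (j-k0) * g (j+k0)) * (\<Prod>k\<in>I-{k0}. g (j-k) * g (j+k))"
      using prod.remove[OF fI jI, of "\<lambda>k. g (j-k) * g (j+k)"] by simp
    also have "(\<Prod>k\<in>I-{k0}. g (j-k) * g (j+k)) = Q" unfolding Q_def
    proof (rule prod.cong[OF refl])
      fix k assume "k \<in> I - {k0}"
      then have k: "1 \<le> k" "k \<le> l" "k \<noteq> k0" unfolding I_def by auto
      have "j-k \<noteq> 0" using C2 k assms unfolding k0_def by linarith
      moreover have "j-k \<noteq> N" using C2 k assms unfolding k0_def by linarith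
      moreover have "j+k \<noteq> 0" using C2 k assms unfolding k0_def by linarith
      moreover have "j+k \<noteq> N" using C2 k assms unfolding k0_def by linarith
      ultimately show "g (j-k) * g (j+k) = AA N j k" unfolding g_def AA_def by simp
    qed
    also have "g (j-k0) * g (j+k0) = - (c * b)"
    proof -
      have e: "j - k0 = 2*j - N" unfolding k0_def by simp
      have "g (j-k0) = br N (2*j - N)" unfolding e g_def using C2 assms by auto
      also have "\<dots> = - (c*b)" using br_shift[OF N0, of "2*j"] dbl by simp
      finally show ?thesis unfolding g_def k0_def by simp
    qed
    finally have "SS' N (j-l) (j+l) = g j * (- (c * b) * Q)" using SSp by simp
    moreover have "g j = b" unfolding g_def b_def using C2 assms by simp
    ultimately show ?thesis unfolding DDe D1 D2 pp P0 by (simp add: power2_eq_square)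
  next
    case C3
    have D1: "DD1 N m j l = 0" unfolding DD1_def using C3 by simp
    have D2: "DD2 N j l = 0" unfolding DD2_def using C3 by auto
    have jI: "j \<in> I" unfolding I_def using C3 by simp
    have z: "AA N j j = 0" unfolding AA_def by simp
    have P0: "P = 0" unfolding P_def by (rule prod_zero[OF fI]) (use jI z in blast)
    show ?thesis
    proof (cases "j = N - j")
      case True
      have "2*j = N" using True by simp
      then have "c * b = 0" using dbl brN[OF N0] by simp
      moreover have "b \<noteq> 0" unfolding b_def using C3 assms by (intro br_nz) auto
      ultimately have "c = 0" by simp
      then show ?thesis unfolding DDe D1 D2 P0 by simp
    next
      case False
      have kI: "N - j \<in> I - {j}" unfolding I_def using C3 assms False by auto
      have z2: "AA N j (N - j) = 0" unfolding AA_def using brN[OF N0] by simp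
      have "prodp (AA N j) I = prod (AA N j) (I - {j})" using prodp_zero[of I _ "AA N j", OF fI jI z] .
      also have "\<dots> = 0" by (rule prod_zero) (use fI kI z2 in auto)
      finally show ?thesis unfolding DDe D1 D2 P0 by simp
    qed
  qed
qed

end
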